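(* Let $G=(V,E)$ be an undirected graph with $m$ edges and positive capacities $u_e$, let $0<\epsilon<1/7$, $\rho>0$, $F>0$, and let $w\in\mathbb{R}_{>0}^E$ with $\mu=\sum_e w_e$. Set $r_e=w_e/u_e^2$ and suppose $R_{\mathrm{eff}}(r)\le(1-7\epsilon)\mu/F^2$. Let $\tilde f$ be an $s$-$t$ flow of value $F$ with $\mathcal{E}_r(\tilde f)\le(1+\epsilon^2)F^2R_{\mathrm{eff}}(r)$. Define $w'_e=w_e+\frac{\epsilon}{\rho}\,\mathrm{cong}_{\tilde f}(e)\,w_e+\frac{\epsilon^2}{m\rho}\mu$ and $\mu'=\sum_e w'_e$. Then $\mu'\le\mu\exp\!\big(\frac{\epsilon(1-2\epsilon)}{\rho}\big)$.
   Context: Edges are arbitrarily oriented; an $s$-$t$ flow is $f:E\to\mathbb{R}$ conserving flow at all vertices other than $s,t$, with value the net flow out of $s$. $\mathrm{cong}_f(e)=|f(e)|/u_e$. $\mathcal{E}_r(f)=\sum_e r_e f(e)^2$. The effective $s$-$t$ resistance $R_{\mathrm{eff}}(r)$ is the minimum of $\mathcal{E}_r$ over $s$-$t$ flows of value $1$, so the electrical flow of value $F$ has energy $F^2R_{\mathrm{eff}}(r)$. *)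

theory Defs
  imports Complex_Main
begin

text \<open>An undirected (multi)graph is given by a vertex set V, an edge set E and, for
each edge, two endpoints src e and dst e; this fixes an arbitrary orientation of
each edge (from src e to dst e). A flow assigns a real f e to each edge; positive
values mean flow from src e to dst e.\<close>

definition net_out :: "'e set \<Rightarrow> ('e \<Rightarrow> 'v) \<Rightarrow> ('e \<Rightarrow> 'v) \<Rightarrow> ('e \<Rightarrow> real) \<Rightarrow> 'v \<Rightarrow> real" where
  "net_out E src dst f v =
     (\<Sum>e\<in>E. if src e = v then f e else 0) - (\<Sum>e\<in>E. if dst e = v then f e else 0)"

definition is_st_flow :: "'v set \<Rightarrow> 'e set \<Rightarrow> ('e \<Rightarrow> 'v) \<Rightarrow> ('e \<Rightarrow> 'v) \<Rightarrow> 'v \<Rightarrow> 'v \<Rightarrow> ('e \<Rightarrow> real) \<Rightarrow> bool" where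
  "is_st_flow V E src dst s t f \<longleftrightarrow> (\<forall>v\<in>V. v \<noteq> s \<and> v \<noteq> t \<longrightarrow> net_out E src dst f v = 0)"

definition flow_value :: "'e set \<Rightarrow> ('e \<Rightarrow> 'v) \<Rightarrow> ('e \<Rightarrow> 'v) \<Rightarrow> 'v \<Rightarrow> ('e \<Rightarrow> real) \<Rightarrow> real" where
  "flow_value E src dst s f = net_out E src dst f s"

definition cong :: "('e \<Rightarrow> real) \<Rightarrow> ('e \<Rightarrow> real) \<Rightarrow> 'e \<Rightarrow> real" where
  "cong u f e = \<bar>f e\<bar> / u e"

definition energy :: "'e set \<Rightarrow> ('e \<Rightarrow> real) \<Rightarrow> ('e \<Rightarrow> real) \<Rightarrow> real" where
  "energy E r f = (\<Sum>e\<in>E. r e * (f e)\<^sup>2)"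

definition R_eff :: "'v set \<Rightarrow> 'e set \<Rightarrow> ('e \<Rightarrow> 'v) \<Rightarrow> ('e \<Rightarrow> 'v) \<Rightarrow> 'v \<Rightarrow> 'v \<Rightarrow> ('e \<Rightarrow> real) \<Rightarrow> real" where
  "R_eff V E src dst s t r =
     Inf {energy E r f | f. is_st_flow V E src dst s t f \<and> flow_value E src dst s f = 1}"

end

theory Submission
  imports Defs
begin

theorem lemma5p4:
  fixes V :: "'v set" and E :: "'e set" and src dst :: "'e \<Rightarrow> 'v" and s t :: 'v
    and u w f :: "'e \<Rightarrow> real" and \<epsilon> \<rho> F :: real
  assumes "finite V" and "finite E"
    and "\<forall>e\<in>E. src e \<in> V \<and> dst e \<in> V"
    and "s \<in> V" and "t \<in> V" and "s \<noteq> t"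
    and "\<forall>e\<in>E. u e > 0"
    and "0 < \<epsilon>" and "\<epsilon> < 1/7" and "\<rho> > 0" and "F > 0"
    and "\<forall>e\<in>E. w e > 0"
    and "R_eff V E src dst s t (\<lambda>e. w e / (u e)\<^sup>2) \<le> (1 - 7*\<epsilon>) * (\<Sum>e\<in>E. w e) / F\<^sup>2"
    and "is_st_flow V E src dst s t f" and "flow_value E src dst s f = F"
    and "energy E (\<lambda>e. w e / (u e)\<^sup>2) f
           \<le> (1 + \<epsilon>\<^sup>2) * F\<^sup>2 * R_eff V E src dst s t (\<lambda>e. w e / (u e)\<^sup>2)"
  shows "(\<Sum>e\<in>E. w e + (\<epsilon> / \<rho>) * cong u f e * w e
                    + \<epsilon>\<^sup>2 / (real (card E) * \<rho>) * (\<Sum>e'\<in>E. w e'))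
         \<le> (\<Sum>e\<in>E. w e) * exp (\<epsilon> * (1 - 2*\<epsilon>) / \<rho>)"
proof (cases "E = {}")
  case True thus ?thesis by simp
next
  case False
  define \<mu> where "\<mu> = (\<Sum>e\<in>E. w e)"
  define R where "R = R_eff V E src dst s t (\<lambda>e. w e / (u e)\<^sup>2)"
  define c where "c = 1 - 3*\<epsilon>"
  have c0: "c > 0" using assms(9) by (simp add: c_def)
  have mu0: "\<mu> \<ge> 0" unfolding \<mu>_def using assms(12) by (simp add: sum_nonneg less_imp_le)
  have en: "energy E (\<lambda>e. w e / (u e)\<^sup>2) f = (\<Sum>e\<in>E. w e * (cong u f e)^2)"
    unfolding energy_def cong_def
    by (rule sum.cong) (auto simp: power_divide power2_abs)
  have F2: "F^2 > 0" using assms(11) by simp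
  have "energy E (\<lambda>e. w e / (u e)\<^sup>2) f \<le> (1 + \<epsilon>\<^sup>2) * F\<^sup>2 * ((1 - 7*\<epsilon>) * \<mu> / F\<^sup>2)"
  proof -
    have "(1 + \<epsilon>\<^sup>2) * F\<^sup>2 * R \<le> (1 + \<epsilon>\<^sup>2) * F\<^sup>2 * ((1 - 7*\<epsilon>) * \<mu> / F\<^sup>2)"
      by (rule mult_left_mono) (use assms(13) in \<open>auto simp: R_def \<mu>_def\<close>)
    thus ?thesis using assms(16) unfolding R_def by linarith
  qed
  also have "\<dots> = (1 + \<epsilon>\<^sup>2) * (1 - 7*\<epsilon>) * \<mu>" using F2 by (simp add: field_simps)
  also have "\<dots> \<le> c^2 * \<mu>"
  proof (rule mult_right_mono[OF _ mu0])
    show "(1 + \<epsilon>\<^sup>2) * (1 - 7*\<epsilon>) \<le> c^2"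
    proof -
      have "c^2 - (1 + \<epsilon>\<^sup>2) * (1 - 7*\<epsilon>) = \<epsilon> + 8*\<epsilon>^2 + 7*\<epsilon>^3"
        unfolding c_def by (simp add: power2_eq_square power3_eq_cube algebra_simps)
      moreover have "\<epsilon> + 8*\<epsilon>^2 + 7*\<epsilon>^3 \<ge> 0" using assms(8) by simp
      ultimately show ?thesis by linarith
    qed
  qed
  finally have E1: "(\<Sum>e\<in>E. w e * (cong u f e)^2) \<le> c^2 * \<mu>" using en by simp
  have pw: "w e * cong u f e \<le> c/2 * w e + w e * (cong u f e)^2 / (2*c)" if "e \<in> E" for e
  proof -
    have "2*c*cong u f e \<le> c^2 + (cong u f e)^2"
    proof -
      have "0 \<le> (cong u f e - c)^2" by simp
      also have "(cong u f e - c)^2 = c^2 + (cong u f e)^2 - 2*c*cong u f e"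
        by (simp add: power2_diff algebra_simps)
      finally show ?thesis by linarith
    qed
    hence "cong u f e \<le> c/2 + (cong u f e)^2/(2*c)" using c0 by (simp add: field_simps power2_eq_square)
    hence "w e * cong u f e \<le> w e * (c/2 + (cong u f e)^2/(2*c))"
      using assms(12) that by (simp add: mult_left_mono less_imp_le)
    thus ?thesis by (simp add: algebra_simps)
  qed
  have "(\<Sum>e\<in>E. w e * cong u f e) \<le> (\<Sum>e\<in>E. c/2 * w e + w e * (cong u f e)^2 / (2*c))"
    by (rule sum_mono) (use pw in auto)
  also have "\<dots> = c/2 * \<mu> + (\<Sum>e\<in>E. w e * (cong u f e)^2) / (2*c)"
    by (simp add: sum.distrib sum_distrib_left sum_divide_distrib \<mu>_def)
  also have "\<dots> \<le> c/2 * \<mu> + c^2*\<mu>/(2*c)"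
    using E1 c0 by (simp add: divide_right_mono)
  also have "\<dots> = c * \<mu>" using c0 by (simp add: field_simps power2_eq_square)
  finally have S: "(\<Sum>e\<in>E. w e * cong u f e) \<le> c * \<mu>" .
  have cardE: "real (card E) > 0" using False assms(2) by (simp add: card_gt_0_iff)
  have "(\<Sum>e\<in>E. w e + (\<epsilon> / \<rho>) * cong u f e * w e
                    + \<epsilon>\<^sup>2 / (real (card E) * \<rho>) * (\<Sum>e'\<in>E. w e'))
        = \<mu> + (\<epsilon>/\<rho>) * (\<Sum>e\<in>E. w e * cong u f e) + \<epsilon>\<^sup>2/\<rho> * \<mu>"
    using cardE by (simp add: sum.distrib sum_distrib_left \<mu>_def[symmetric] algebra_simps)
  also have "\<dots> \<le> \<mu> + (\<epsilon>/\<rho>) * (c*\<mu>) + \<epsilon>\<^sup>2/\<rho> * \<mu>"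
    using S assms(8,10) by (simp add: mult_left_mono divide_right_mono)
  also have "\<dots> = \<mu> * (1 + \<epsilon> * (1 - 2*\<epsilon>) / \<rho>)"
    using assms(10) by (simp add: c_def field_simps power2_eq_square)
  also have "\<dots> \<le> \<mu> * exp (\<epsilon> * (1 - 2*\<epsilon>) / \<rho>)"
    using mu0 by (simp add: mult_left_mono exp_ge_add_one_self)
  finally show ?thesis unfolding \<mu>_def .
qed

end
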